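(* Let $\alpha,\beta,\gamma$ be real (e.g. $>-1$) and $\delta\neq\pm1$. For all $0\le k\le n$, $L_2\mathcal J_{n,k}=\nu_k\mathcal J_{n,k}$, where $\nu_k=2k$ if $k$ is even, $\nu_k=-2(k+\beta+\gamma+1)$ if $k$ is odd, and $$L_2=\frac{2(y-x)(x+\delta)}{x}R_x\partial_x+\frac{(\gamma+\beta+1)x^2+(\delta\gamma-\beta y)x+\delta y}{x^2}\,(R_x-\mathbb I).$$
   Context: $R_x f(x,y)=f(-x,y)$, $\mathbb I$ is the identity; products of operators are compositions (rightmost acts first), coefficients act by multiplication; the identity is between rational functions of $(x,y)$. For real $a,b$ and $c^2\neq1$, the Big $-1$ Jacobi polynomials are $$J_{n}(x;a,b,c)=\begin{cases}{}_2F_1\!\left(\begin{smallmatrix}-\frac n2,\ \frac{n+a+b+2}{2}\\ \frac{a+1}{2}\end{smallmatrix};\frac{1-x^2}{1-c^2}\right)+\frac{n(1-x)}{(1+c)(a+1)}\,{}_2F_1\!\left(\begin{smallmatrix}1-\frac n2,\ \frac{n+a+b+2}{2}\\ \frac{a+3}{2}\end{smallmatrix};\frac{1-x^2}{1-c^2}\right), & n\text{ even},\\[2mm] {}_2F_1\!\left(\begin{smallmatrix}-\frac{n-1}2,\ \frac{n+a+b+1}{2}\\ \frac{a+1}{2}\end{smallmatrix};\frac{1-x^2}{1-c^2}\right)-\frac{(n+a+b+1)(1-x)}{(1+c)(a+1)}\,{}_2F_1\!\left(\begin{smallmatrix}-\frac{n-1}2,\ \frac{n+a+b+3}{2}\\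 \frac{a+3}{2}\end{smallmatrix};\frac{1-x^2}{1-c^2}\right), & n\text{ odd}.\end{cases}$$ Let $\rho_k(y)=y^k(1-\delta^2/y^2)^{k/2}$ for $k$ even and $\rho_k(y)=y^k(1-\delta^2/y^2)^{(k-1)/2}(1+\delta/y)$ for $k$ odd, and $$\mathcal{J}_{n,k}(x,y)=J_{n-k}\big(y;\alpha,2k+\beta+\gamma+1,(-1)^k\delta\big)\,\rho_k(y)\,J_k\Big(\frac{x}{y};\gamma,\beta,\frac{\delta}{y}\Big).$$ *)

theory Defs
  imports "HOL-Analysis.Analysis"
begin

definition hyp2F1 :: "real \<Rightarrow> real \<Rightarrow> real \<Rightarrow> real \<Rightarrow> real" where
  "hyp2F1 a b c z = (\<Sum>m. pochhammer a m * pochhammer b m / (pochhammer c m * fact m) * z ^ m)"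

definition bigJ :: "nat \<Rightarrow> real \<Rightarrow> real \<Rightarrow> real \<Rightarrow> real \<Rightarrow> real" where
  "bigJ n x a b c =
    (let z = (1 - x^2) / (1 - c^2) in
     if even n then
       hyp2F1 (- real n / 2) ((real n + a + b + 2) / 2) ((a + 1) / 2) z
       + real n * (1 - x) / ((1 + c) * (a + 1)) *
         hyp2F1 (1 - real n / 2) ((real n + a + b + 2) / 2) ((a + 3) / 2) z
     else
       hyp2F1 (- (real n - 1) / 2) ((real n + a + b + 1) / 2) ((a + 1) / 2) z
       - (real n + a + b + 1) * (1 - x) / ((1 + c) * (a + 1)) *
         hyp2F1 (- (real n - 1) / 2) ((real n + a + b + 3) / 2) ((a + 3) / 2) z)"

definition rho :: "real \<Rightarrow> nat \<Rightarrow> real \<Rightarrow> real" where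
  "rho \<delta> k y =
    (if even k then y ^ k * (1 - \<delta>^2 / y^2) ^ (k div 2)
     else y ^ k * (1 - \<delta>^2 / y^2) ^ ((k - 1) div 2) * (1 + \<delta> / y))"

definition calJ :: "real \<Rightarrow> real \<Rightarrow> real \<Rightarrow> real \<Rightarrow> nat \<Rightarrow> nat \<Rightarrow> real \<Rightarrow> real \<Rightarrow> real" where
  "calJ \<alpha> \<beta> \<gamma> \<delta> n k x y =
    bigJ (n - k) y \<alpha> (2 * real k + \<beta> + \<gamma> + 1) ((-1) ^ k * \<delta>)
    * rho \<delta> k y * bigJ k (x / y) \<gamma> \<beta> (\<delta> / y)"

text \<open>The operator L_2 applied to f at (x,y); R_x d_x f (x,y) = (d_x f)(-x,y).\<close>
definition L2 :: "real \<Rightarrow> real \<Rightarrow> real \<Rightarrow> (real \<Rightarrow> real \<Rightarrow> real) \<Rightarrow> real \<Rightarrow> real \<Rightarrow> real" where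
  "L2 \<beta> \<gamma> \<delta> f x y =
    2 * (y - x) * (x + \<delta>) / x * deriv (\<lambda>t. f t y) (- x)
    + ((\<gamma> + \<beta> + 1) * x^2 + (\<delta> * \<gamma> - \<beta> * y) * x + \<delta> * y) / x^2 * (f (- x) y - f x y)"

definition nu :: "real \<Rightarrow> real \<Rightarrow> nat \<Rightarrow> real" where
  "nu \<beta> \<gamma> k = (if even k then 2 * real k else - 2 * (real k + \<beta> + \<gamma> + 1))"

end

theory Submission
  imports Defs "HOL-Computational_Algebra.Polynomial"
begin

definition T :: "real \<Rightarrow> real \<Rightarrow> real \<Rightarrow> nat \<Rightarrow> real" where
  "T a b c m = pochhammer a m * pochhammer b m / (pochhammer c m * fact m)"

lemma T_sym: "T a b c m = T b a c m" unfolding T_def by (simp add: mult.commute)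

lemma fr: "(y::real) \<noteq> 0 \<Longrightarrow> z \<noteq> 0 \<Longrightarrow> x*z = w*y \<Longrightarrow> x/y = w/z"
  by (simp add: frac_eq_eq)

lemma C1:
  assumes c: "c > 0"
  shows "(of_nat m + 1) * T a b c (Suc m) = (a/c)*(b + of_nat m) * T (a+1) b (c+1) m"
proof -
  have pc: "pochhammer (c+1) m \<noteq> 0" using c pochhammer_pos[of "c+1" m] by simp
  have pc0: "pochhammer c (Suc m) \<noteq> 0" using c pochhammer_pos[of "c" "Suc m"] by simp
  have f: "(fact m :: real) \<noteq> 0" by simp
  have f1: "(fact (Suc m) :: real) \<noteq> 0" by simp
  have L: "(of_nat m + 1) * T a b c (Suc m) = ((of_nat m + 1) * pochhammer a (Suc m) * pochhammer b (Suc m)) / (pochhammer c (Suc m) * fact (Suc m))"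
    unfolding T_def by simp
  have R: "(a/c)*(b + of_nat m) * T (a+1) b (c+1) m = (a*(b + of_nat m) * pochhammer (a+1) m * pochhammer b m) / (c * (pochhammer (c+1) m * fact m))"
    unfolding T_def by simp
  show ?thesis unfolding L R
  proof (rule fr)
    show "pochhammer c (Suc m) * fact (Suc m) \<noteq> 0" using pc0 f1 by simp
    show "c * (pochhammer (c+1) m * fact m) \<noteq> (0::real)" using c pc f by simp
    have e1: "pochhammer a (Suc m) = a * pochhammer (a+1) m" by (rule pochhammer_rec)
    have e2: "pochhammer b (Suc m) = pochhammer b m * (b + of_nat m)" by (rule pochhammer_Suc)
    have e3: "pochhammer c (Suc m) = c * pochhammer (c+1) m" by (rule pochhammer_rec)
    have e4: "(fact (Suc m)::real) = (of_nat m + 1) * fact m" by simp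
    show "(of_nat m + 1) * pochhammer a (Suc m) * pochhammer b (Suc m) * (c * (pochhammer (c + 1) m * fact m)) =
          a * (b + of_nat m) * pochhammer (a + 1) m * pochhammer b m * (pochhammer c (Suc m) * fact (Suc m))"
      unfolding e1 e2 e3 e4 by (simp add: algebra_simps)
  qed
qed

lemma C2:
  assumes c: "c > 0"
  shows "(of_nat m + a) * T a b c m = (a/c)*(of_nat m + c) * T (a+1) b (c+1) m"
proof -
  have pc: "pochhammer (c+1) m \<noteq> 0" using c pochhammer_pos[of "c+1" m] by simp
  have pc0: "pochhammer c m \<noteq> 0" using c pochhammer_pos[of "c" m] by simp
  have f: "(fact m :: real) \<noteq> 0" by simp
  have ea: "pochhammer a m * (a + of_nat m) = a * pochhammer (a+1) m"
    using pochhammer_rec[of a m] pochhammer_Suc[of a m] by simp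
  have ec: "pochhammer c m * (c + of_nat m) = c * pochhammer (c+1) m"
    using pochhammer_rec[of c m] pochhammer_Suc[of c m] by simp
  have L: "(of_nat m + a) * T a b c m = ((of_nat m + a) * pochhammer a m * pochhammer b m) / (pochhammer c m * fact m)"
    unfolding T_def by simp
  have R: "(a/c)*(of_nat m + c) * T (a+1) b (c+1) m = (a*(of_nat m + c) * pochhammer (a+1) m * pochhammer b m) / (c * (pochhammer (c+1) m * fact m))"
    unfolding T_def by simp
  show ?thesis unfolding L R
  proof (rule fr)
    show "pochhammer c m * fact m \<noteq> 0" using pc0 f by simp
    show "c * (pochhammer (c+1) m * fact m) \<noteq> (0::real)" using c pc f by simp
    show "(of_nat m + a) * pochhammer a m * pochhammer b m * (c * (pochhammer (c + 1) m * fact m)) =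
          a * (of_nat m + c) * pochhammer (a + 1) m * pochhammer b m * (pochhammer c m * fact m)"
      using ea ec by algebra
  qed
qed

definition mkp :: "nat \<Rightarrow> (nat \<Rightarrow> real) \<Rightarrow> real poly" where
  "mkp N p = (\<Sum>m<N. monom (p m) m)"

lemma coeff_mkp:
  assumes "\<And>m. m \<ge> N \<Longrightarrow> p m = 0"
  shows "coeff (mkp N p) m = p m"
  unfolding mkp_def coeff_sum using assms by (cases "m < N") auto

lemma poly_mkp: "poly (mkp N p) z = (\<Sum>m<N. p m * z^m)"
  unfolding mkp_def poly_sum by (simp add: poly_monom)

lemma hyp_poly:
  assumes "\<And>m. m \<ge> N \<Longrightarrow> pochhammer a m = 0"
  shows "hyp2F1 a b c z = poly (mkp N (T a b c)) z"
  unfolding hyp2F1_def poly_mkp T_def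
  by (rule suminf_finite[where N="{..<N}"]) (use assms in auto)

lemma polyrel:
  fixes p r :: "nat \<Rightarrow> real"
  assumes O: "\<And>m. (of_nat m + 1)*p (Suc m) + (of_nat m + e)*r m = 0"
    and EO: "\<And>m. (of_nat m + f)*p m + (of_nat m + c)*r m = 0"
    and vp: "\<And>m. m \<ge> N \<Longrightarrow> p m = 0" and vr: "\<And>m. m \<ge> N \<Longrightarrow> r m = 0"
  shows "poly (pderiv (mkp N p)) z + z*poly (pderiv (mkp N r)) z + e*poly (mkp N r) z = 0"
    and "z*poly (pderiv (mkp N p)) z + z*poly (pderiv (mkp N r)) z + c*poly (mkp N r) z + f*poly (mkp N p) z = 0"
proof -
  have cp: "\<And>m. coeff (mkp N p) m = p m" using coeff_mkp vp by blast
  have cr: "\<And>m. coeff (mkp N r) m = r m" using coeff_mkp vr by blast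
  have "pderiv (mkp N p) + pCons 0 (pderiv (mkp N r)) + smult e (mkp N r) = 0"
  proof (rule poly_eqI)
    fix m show "coeff (pderiv (mkp N p) + pCons 0 (pderiv (mkp N r)) + smult e (mkp N r)) m = coeff 0 m"
      using O[of m] by (cases m) (auto simp: coeff_pderiv cp cr coeff_pCons algebra_simps)
  qed
  then have "poly (pderiv (mkp N p) + pCons 0 (pderiv (mkp N r)) + smult e (mkp N r)) z = 0" by simp
  then show "poly (pderiv (mkp N p)) z + z*poly (pderiv (mkp N r)) z + e*poly (mkp N r) z = 0" by simp
  have "pCons 0 (pderiv (mkp N p)) + pCons 0 (pderiv (mkp N r)) + smult c (mkp N r) + smult f (mkp N p) = 0"
  proof (rule poly_eqI)
    fix m show "coeff (pCons 0 (pderiv (mkp N p)) + pCons 0 (pderiv (mkp N r)) + smult c (mkp N r) + smult f (mkp N p)) m = coeff 0 m"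
      using EO[of m] by (cases m) (auto simp: coeff_pderiv cp cr coeff_pCons algebra_simps)
  qed
  then have "poly (pCons 0 (pderiv (mkp N p)) + pCons 0 (pderiv (mkp N r)) + smult c (mkp N r) + smult f (mkp N p)) z = 0" by simp
  then show "z*poly (pderiv (mkp N p)) z + z*poly (pderiv (mkp N r)) z + c*poly (mkp N r) z + f*poly (mkp N p) z = 0" by (simp add: algebra_simps)
qed

lemma mkp_smult: "poly (mkp N (\<lambda>m. s * p m)) z = s * poly (mkp N p) z"
  unfolding poly_mkp by (simp add: sum_distrib_left algebra_simps)

lemma rep:
  fixes k :: nat and \<gamma> \<beta> q :: real
  assumes g: "\<gamma> > -1"
  shows "\<exists>PP RR e f cc. (\<forall>v. bigJ k v \<gamma> \<beta> q = poly PP ((1-v^2)/(1-q^2)) + (1-v)*poly RR ((1-v^2)/(1-q^2))/(1+q))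
     \<and> (\<forall>z. poly (pderiv PP) z + z*poly (pderiv RR) z + e*poly RR z = 0)
     \<and> (\<forall>z. z*poly (pderiv PP) z + z*poly (pderiv RR) z + cc*poly RR z + f*poly PP z = 0)
     \<and> \<gamma>+1 = 2*cc \<and> \<gamma>+\<beta>+2 = 2*(e+f) \<and> nu \<beta> \<gamma> k = -4*f"
proof (cases "even k")
  case True
  then obtain j where kj: "k = 2*j" by (auto elim: evenE)
  define a where "a = - real j"
  define b where "b = (real k + \<gamma> + \<beta> + 2)/2"
  define c where "c = (\<gamma>+1)/2"
  have c0: "c > 0" using g c_def by simp
  define N where "N = Suc j"
  define p where "p = T a b c"
  define r where "r = (\<lambda>m. -(a/c) * T (a+1) b (c+1) m)"
  have pa0: "\<And>m. m > j \<Longrightarrow> pochhammer a m = 0"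
    unfolding a_def by (rule pochhammer_of_nat_eq_0_lemma)
  have O: "(of_nat m + 1)*p (Suc m) + (of_nat m + b)*r m = 0" for m
  proof -
    have "(of_nat m + b)*r m = -((a/c)*(b + of_nat m) * T (a+1) b (c+1) m)" unfolding r_def using c0 by (simp add: field_simps)
    then show ?thesis unfolding p_def using C1[OF c0, of m a b] by simp
  qed
  have EO: "(of_nat m + a)*p m + (of_nat m + c)*r m = 0" for m
  proof -
    have "(of_nat m + c)*r m = -((a/c)*(of_nat m + c) * T (a+1) b (c+1) m)" unfolding r_def using c0 by (simp add: field_simps)
    then show ?thesis unfolding p_def using C2[OF c0, of m a b] by simp
  qed
  have vp: "\<And>m. m \<ge> N \<Longrightarrow> p m = 0" unfolding p_def T_def N_def using pa0 by simp
  have vr: "\<And>m. m \<ge> N \<Longrightarrow> r m = 0"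
  proof -
    fix m assume "m \<ge> N"
    then have "pochhammer a (Suc m) = 0" using pa0 N_def by simp
    then have "a * pochhammer (a+1) m = 0" by (simp add: pochhammer_rec)
    then show "r m = 0" unfolding r_def T_def by auto
  qed
  note PR = polyrel[where N=N, OF O EO vp vr]
  have repr: "bigJ k v \<gamma> \<beta> q = poly (mkp N p) ((1-v^2)/(1-q^2)) + (1-v)*poly (mkp N r) ((1-v^2)/(1-q^2))/(1+q)" for v
  proof -
    define z where "z = (1-v^2)/(1-q^2)"
    have ha: "- real k / 2 = a" unfolding a_def kj by simp
    have hb: "(real k + \<gamma> + \<beta> + 2) / 2 = b" unfolding b_def by simp
    have hc: "(\<gamma> + 1) / 2 = c" unfolding c_def by simp
    have hb1: "1 - real k / 2 = a + 1" unfolding a_def kj by simp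
    have hc1: "(\<gamma> + 3) / 2 = c + 1" unfolding c_def by simp
    have B: "bigJ k v \<gamma> \<beta> q = hyp2F1 a b c z + real k * (1-v) / ((1+q)*(\<gamma>+1)) * hyp2F1 (a+1) b (c+1) z"
      unfolding bigJ_def Let_def z_def using True by (simp only: ha hb hc hb1 hc1 if_True)
    have P: "hyp2F1 a b c z = poly (mkp N p) z" unfolding p_def
      by (rule hyp_poly) (use pa0 N_def in auto)
    have R: "real k * (1-v) / ((1+q)*(\<gamma>+1)) * hyp2F1 (a+1) b (c+1) z = (1-v)*poly (mkp N r) z/(1+q)"
    proof (cases "j = 0")
      case True
      then have "r = (\<lambda>m. 0 * T (a+1) b (c+1) m)" unfolding r_def a_def by simp
      then have "poly (mkp N r) z = 0" using mkp_smult[of N 0 "T (a+1) b (c+1)" z] by simp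
      then show ?thesis using True kj by simp
    next
      case False
      have "hyp2F1 (a+1) b (c+1) z = poly (mkp N (T (a+1) b (c+1))) z"
      proof (rule hyp_poly)
        fix m assume "N \<le> m"
        have "a + 1 = - of_nat (j - 1)" unfolding a_def using False by (simp add: of_nat_diff)
        moreover have "pochhammer (- of_nat (j-1) :: real) m = 0"
          by (rule pochhammer_of_nat_eq_0_lemma) (use \<open>N \<le> m\<close> N_def in simp)
        ultimately show "pochhammer (a+1) m = 0" by simp
      qed
      moreover have M: "poly (mkp N r) z = -(a/c) * poly (mkp N (T (a+1) b (c+1))) z"
        unfolding r_def by (rule mkp_smult)
      moreover have K: "real k / (\<gamma>+1) = -(a/c)" unfolding a_def c_def kj using g by (simp add: field_simps)
      moreover have "real k * (1-v) / ((1+q)*(\<gamma>+1)) * hyp2F1 (a+1) b (c+1) z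
        = (1-v) * (real k / (\<gamma>+1)) * hyp2F1 (a+1) b (c+1) z / (1+q)" by (simp add: mult_ac)
      ultimately show ?thesis by simp
    qed
    show ?thesis using B P R z_def by simp
  qed
  show ?thesis
    apply (rule exI[of _ "mkp N p"], rule exI[of _ "mkp N r"], rule exI[of _ b], rule exI[of _ a], rule exI[of _ c])
    using repr PR unfolding nu_def using True unfolding a_def b_def c_def kj by (auto simp: field_simps)
next
  case False
  then obtain j where kj: "k = 2*j+1" by (metis oddE)
  define a where "a = - real j"
  define b where "b = (real k + \<gamma> + \<beta> + 1)/2"
  define c where "c = (\<gamma>+1)/2"
  have c0: "c > 0" using g c_def by simp
  define N where "N = Suc j"
  define p where "p = T a b c"
  define r where "r = (\<lambda>m. -(b/c) * T a (b+1) (c+1) m)"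
  have pa0: "\<And>m. m > j \<Longrightarrow> pochhammer a m = 0"
    unfolding a_def by (rule pochhammer_of_nat_eq_0_lemma)
  have O: "(of_nat m + 1)*p (Suc m) + (of_nat m + a)*r m = 0" for m
  proof -
    have "(of_nat m + a)*r m = -((b/c)*(a + of_nat m) * T (b+1) a (c+1) m)" unfolding r_def using c0 by (simp add: field_simps T_sym)
    then show ?thesis unfolding p_def using C1[OF c0, of m b a] by (simp add: T_sym)
  qed
  have EO: "(of_nat m + b)*p m + (of_nat m + c)*r m = 0" for m
  proof -
    have "(of_nat m + c)*r m = -((b/c)*(of_nat m + c) * T (b+1) a (c+1) m)" unfolding r_def using c0 by (simp add: field_simps T_sym)
    then show ?thesis unfolding p_def using C2[OF c0, of m b a] by (simp add: T_sym)
  qed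
  have vp: "\<And>m. m \<ge> N \<Longrightarrow> p m = 0" unfolding p_def T_def N_def using pa0 by simp
  have vr: "\<And>m. m \<ge> N \<Longrightarrow> r m = 0" unfolding r_def T_def N_def using pa0 by simp
  note PR = polyrel[where N=N, OF O EO vp vr]
  have repr: "bigJ k v \<gamma> \<beta> q = poly (mkp N p) ((1-v^2)/(1-q^2)) + (1-v)*poly (mkp N r) ((1-v^2)/(1-q^2))/(1+q)" for v
  proof -
    define z where "z = (1-v^2)/(1-q^2)"
    have ha: "- (real k - 1) / 2 = a" unfolding a_def kj by simp
    have hb: "(real k + \<gamma> + \<beta> + 1) / 2 = b" unfolding b_def by simp
    have hc: "(\<gamma> + 1) / 2 = c" unfolding c_def by simp
    have hb1: "(real k + \<gamma> + \<beta> + 3) / 2 = b + 1" unfolding b_def by simp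
    have hc1: "(\<gamma> + 3) / 2 = c + 1" unfolding c_def by simp
    have B: "bigJ k v \<gamma> \<beta> q = hyp2F1 a b c z - (real k + \<gamma> + \<beta> + 1) * (1-v) / ((1+q)*(\<gamma>+1)) * hyp2F1 a (b+1) (c+1) z"
      unfolding bigJ_def Let_def z_def using False by (simp only: ha hb hc hb1 hc1 if_False)
    have P: "hyp2F1 a b c z = poly (mkp N p) z" unfolding p_def
      by (rule hyp_poly) (use pa0 N_def in auto)
    have H2: "hyp2F1 a (b+1) (c+1) z = poly (mkp N (T a (b+1) (c+1))) z"
      by (rule hyp_poly) (use pa0 N_def in auto)
    have M: "poly (mkp N r) z = -(b/c) * poly (mkp N (T a (b+1) (c+1))) z"
      unfolding r_def by (rule mkp_smult)
    have K: "(real k + \<gamma> + \<beta> + 1) / (\<gamma>+1) = b/c" unfolding b_def c_def using g by (simp add: field_simps)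
    have "(real k + \<gamma> + \<beta> + 1) * (1-v) / ((1+q)*(\<gamma>+1)) * hyp2F1 a (b+1) (c+1) z
        = (1-v) * ((real k + \<gamma> + \<beta> + 1) / (\<gamma>+1)) * hyp2F1 a (b+1) (c+1) z / (1+q)" by (simp add: mult_ac)
    then have R: "(real k + \<gamma> + \<beta> + 1) * (1-v) / ((1+q)*(\<gamma>+1)) * hyp2F1 a (b+1) (c+1) z = -((1-v)*poly (mkp N r) z/(1+q))"
      unfolding K M H2 by simp
    show ?thesis using B P R z_def by simp
  qed
  show ?thesis
    apply (rule exI[of _ "mkp N p"], rule exI[of _ "mkp N r"], rule exI[of _ a], rule exI[of _ b], rule exI[of _ c])
    using repr PR unfolding nu_def using False unfolding a_def b_def c_def kj by (auto simp: field_simps)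
qed

lemma alg_w:
  fixes u q w z P P1 R R1 e f cc \<gamma> \<beta> :: real
  assumes u: "u \<noteq> 0" and w: "w = 1 + q" and w0: "w \<noteq> 0" and q2: "1 - q\<^sup>2 \<noteq> 0"
    and z: "z = (1 - u\<^sup>2) / (1 - q\<^sup>2)"
    and O: "P1 + z*R1 + e*R = 0" and EO: "z*P1 + z*R1 + cc*R + f*P = 0"
    and g: "\<gamma> + 1 = 2*cc" and gb: "\<gamma> + \<beta> + 2 = 2*(e+f)"
  shows "2*(1-u)*(u+q)/u * (P1*(2*u/(1-q\<^sup>2)) + (- R + (1+u)*(R1*(2*u/(1-q\<^sup>2))))/w)
     + ((\<gamma>+\<beta>+1)*u\<^sup>2 + (q*\<gamma>-\<beta>)*u + q)/u\<^sup>2 * (2*u*R/w)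
     = (-4*f)*(P + (1-u)*R/w)"
proof -
  define D where "D = 1 - q\<^sup>2"
  have D0: "D \<noteq> 0" using q2 D_def by simp
  have zD: "1 - u\<^sup>2 = z*D" using z D0 unfolding D_def by simp
  have uu: "u\<^sup>2 = 1 - z*D" using zD by simp
  have e1: "(1-u)*(u+q) = D*(z - 1/w + u/w)"
  proof -
    have "D*(z - 1/w + u/w) = z*D - (1-q) + u*(1-q)"
    proof -
      have Dq: "D/w = 1-q" using w0 unfolding D_def w by (simp add: field_simps power2_eq_square)
      have "D*(z - 1/w + u/w) = z*D + (u-1)*(D/w)" by (simp add: ring_distribs times_divide_eq_right diff_divide_distrib add_divide_distrib algebra_simps)
      then show ?thesis using Dq by (simp add: algebra_simps)
    qed
    also have "\<dots> = (1-u)*(u+q)" using uu by (simp add: algebra_simps power2_eq_square)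
    finally show ?thesis by simp
  qed
  have L: "2*(1-u)*(u+q)/u * (P1*(2*u/(1-q\<^sup>2)) + (- R + (1+u)*(R1*(2*u/(1-q\<^sup>2))))/w)
     + ((\<gamma>+\<beta>+1)*u\<^sup>2 + (q*\<gamma>-\<beta>)*u + q)/u\<^sup>2 * (2*u*R/w)
     = 4*((1-u)*(u+q))/D*P1 + 4*(1-u\<^sup>2)*(u+q)/D*R1/w
       + 2*R*((\<gamma>+\<beta>+2)*u + q*(\<gamma>+1) - (\<beta>+1))/w"
    unfolding D_def[symmetric] using u w0 D0
    by (simp add: field_simps power2_eq_square)
  have L2: "\<dots> = 4*(z - 1/w + u/w)*P1 + 4*z*(u+q)*R1/w
       + 2*R*((\<gamma>+\<beta>+2)*u + q*(\<gamma>+1) - (\<beta>+1))/w"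
    unfolding e1 zD using D0 by simp
  have P1e: "P1 = - z*R1 - e*R" using O by linarith
  have fP: "f*P = - z*P1 - z*R1 - cc*R" using EO by linarith
  have b: "\<beta> = 2*(e+f) - 2*cc - 1" using g gb by linarith
  have gg: "\<gamma> = 2*cc - 1" using g by linarith
  have M: "4*(w*z - 1 + u)*P1 + 4*z*(u+q)*R1 
       + 2*R*((\<gamma>+\<beta>+2)*u + q*(\<gamma>+1) - (\<beta>+1)) = -4*(w*(f*P) + f*(1-u)*R)"
    unfolding fP unfolding P1e gg b w by (simp add: algebra_simps)
  have R: "(-4*f)*(P + (1-u)*R/w) = -4*(w*(f*P) + f*(1-u)*R)/w"
    using w0 by (simp add: field_simps)
  have L3: "4*(z - 1/w + u/w)*P1 + 4*z*(u+q)*R1/w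
       + 2*R*((\<gamma>+\<beta>+2)*u + q*(\<gamma>+1) - (\<beta>+1))/w
     = (4*(w*z - 1 + u)*P1 + 4*z*(u+q)*R1 
       + 2*R*((\<gamma>+\<beta>+2)*u + q*(\<gamma>+1) - (\<beta>+1)))/w"
    using w0 by (simp add: field_simps)
  show ?thesis using L L2 L3 M R by simp
qed

lemma onevar:
  fixes k :: nat and \<gamma> \<beta> q u :: real
  assumes g: "\<gamma> > -1" and u: "u \<noteq> 0" and q1: "q \<noteq> 1" and q2: "q \<noteq> -1"
  shows "\<exists>G1. ((\<lambda>v. bigJ k v \<gamma> \<beta> q) has_real_derivative G1) (at (-u)) \<and>
     2*(1-u)*(u+q)/u * G1 + ((\<gamma>+\<beta>+1)*u\<^sup>2 + (q*\<gamma>-\<beta>)*u + q)/u\<^sup>2 * (bigJ k (-u) \<gamma> \<beta> q - bigJ k u \<gamma> \<beta> q)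
     = nu \<beta> \<gamma> k * bigJ k u \<gamma> \<beta> q"
proof -
  obtain PP RR e f cc where rp: "\<And>v. bigJ k v \<gamma> \<beta> q = poly PP ((1-v^2)/(1-q^2)) + (1-v)*poly RR ((1-v^2)/(1-q^2))/(1+q)"
    and O: "\<And>z. poly (pderiv PP) z + z*poly (pderiv RR) z + e*poly RR z = 0"
    and EO: "\<And>z. z*poly (pderiv PP) z + z*poly (pderiv RR) z + cc*poly RR z + f*poly PP z = 0"
    and gc: "\<gamma>+1 = 2*cc" and gef: "\<gamma>+\<beta>+2 = 2*(e+f)" and nuf: "nu \<beta> \<gamma> k = -4*f"
    using rep[OF g, of k \<beta> q] by blast
  define D where "D = 1 - q^2"
  have D0: "D \<noteq> 0" unfolding D_def using q1 q2
    by (metis (no_types) eq_iff_diff_eq_0 power2_eq_1_iff)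
  have w0: "1 + q \<noteq> 0" using q2 by (metis add_eq_0_iff eq_neg_iff_add_eq_0 minus_equation_iff)
  define z where "z = (1-u^2)/D"
  have zm: "(1-(-u)^2)/D = z" unfolding z_def by simp
  have dz: "((\<lambda>v. (1-v^2)/D) has_real_derivative (-(2*(-u))/D)) (at (-u))"
    using D0 by (auto intro!: derivative_eq_intros)
  have dP: "((\<lambda>v. poly PP ((1-v^2)/D)) has_real_derivative poly (pderiv PP) ((1-(-u)^2)/D) * (-(2*(-u))/D)) (at (-u))"
    by (rule DERIV_chain2[OF poly_DERIV dz])
  have dR: "((\<lambda>v. poly RR ((1-v^2)/D)) has_real_derivative poly (pderiv RR) ((1-(-u)^2)/D) * (-(2*(-u))/D)) (at (-u))"
    by (rule DERIV_chain2[OF poly_DERIV dz])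
  have d1: "((\<lambda>v. 1 - v) has_real_derivative -1) (at (-u))" by (auto intro!: derivative_eq_intros)
  note d2 = DERIV_mult[OF d1 dR]
  note d3 = DERIV_cdivide[OF d2, of "1+q"]
  note d4 = DERIV_add[OF dP d3]
  define G1 where "G1 = poly (pderiv PP) z * (2*u/(1-q\<^sup>2)) + (- poly RR z + (1+u)*(poly (pderiv RR) z*(2*u/(1-q\<^sup>2))))/(1+q)"
  have fe: "(\<lambda>v. bigJ k v \<gamma> \<beta> q) = (\<lambda>v. poly PP ((1-v^2)/D) + (1 - v) * poly RR ((1-v^2)/D) / (1+q))"
    unfolding D_def using rp by auto
  have dG: "((\<lambda>v. bigJ k v \<gamma> \<beta> q) has_real_derivative G1) (at (-u))"
    unfolding fe
  proof (rule DERIV_cong[OF d4])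
    show "poly (pderiv PP) ((1 - (- u)\<^sup>2) / D) * (- (2 * - u) / D) +
      (- 1 * poly RR ((1 - (- u)\<^sup>2) / D) + poly (pderiv RR) ((1 - (- u)\<^sup>2) / D) * (- (2 * - u) / D) * (1 - - u)) / (1 + q) = G1"
      unfolding G1_def z_def D_def by (simp add: algebra_simps)
  qed
  have bm: "bigJ k (-u) \<gamma> \<beta> q - bigJ k u \<gamma> \<beta> q = 2*u*poly RR z/(1+q)"
  proof -
    have "bigJ k (-u) \<gamma> \<beta> q - bigJ k u \<gamma> \<beta> q = ((1+u)*poly RR z - (1-u)*poly RR z)/(1+q)"
      unfolding rp z_def D_def by (simp add: diff_divide_distrib)
    also have "\<dots> = 2*u*poly RR z/(1+q)" by (simp add: algebra_simps)
    finally show ?thesis .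
  qed
  have bu: "bigJ k u \<gamma> \<beta> q = poly PP z + (1-u)*poly RR z/(1+q)"
    unfolding rp z_def D_def by simp
  have A: "2*(1-u)*(u+q)/u * G1 + ((\<gamma>+\<beta>+1)*u\<^sup>2 + (q*\<gamma>-\<beta>)*u + q)/u\<^sup>2 * (2*u*poly RR z/(1+q))
     = (-4*f)*(poly PP z + (1-u)*poly RR z/(1+q))"
    unfolding G1_def
    by (rule alg_w[OF u refl w0 _ _ O EO gc gef]) (use D0 z_def D_def in auto)
  show ?thesis
    by (rule exI[of _ G1]) (use dG A bm bu nuf in simp)
qed


theorem proposition3p1:
  fixes \<alpha> \<beta> \<gamma> \<delta> x y :: real and n k :: nat
  assumes "\<alpha> > -1" and "\<beta> > -1" and "\<gamma> > -1"
    and "\<delta> \<noteq> 1" and "\<delta> \<noteq> -1"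
    and "k \<le> n"
    and "x \<noteq> 0" and "y \<noteq> 0" and "y \<noteq> \<delta>" and "y \<noteq> - \<delta>"
  shows "L2 \<beta> \<gamma> \<delta> (calJ \<alpha> \<beta> \<gamma> \<delta> n k) x y = nu \<beta> \<gamma> k * calJ \<alpha> \<beta> \<gamma> \<delta> n k x y"
proof -
  note g = assms(3) and x0 = assms(7) and y0 = assms(8) and yd1 = assms(9) and yd2 = assms(10)
  define u where "u = x/y"
  define q where "q = \<delta>/y"
  have u0: "u \<noteq> 0" using x0 y0 u_def by simp
  have q1: "q \<noteq> 1" using yd1 y0 q_def by (auto simp: field_simps)
  have q2: "q \<noteq> -1" using yd2 y0 q_def by (auto simp: field_simps)
  have xu: "x = u*y" using y0 u_def by simp
  have dq: "\<delta> = q*y" using y0 q_def by simp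
  define A where "A = bigJ (n - k) y \<alpha> (2 * real k + \<beta> + \<gamma> + 1) ((-1) ^ k * \<delta>) * rho \<delta> k y"
  define G where "G = (\<lambda>v. bigJ k v \<gamma> \<beta> q)"
  have cj: "(\<lambda>t. calJ \<alpha> \<beta> \<gamma> \<delta> n k t y) = (\<lambda>t. A * G (t/y))"
    unfolding calJ_def A_def G_def q_def by simp
  obtain G1 where dG: "(G has_real_derivative G1) (at (-u))"
    and eq: "2*(1-u)*(u+q)/u * G1 + ((\<gamma>+\<beta>+1)*u\<^sup>2 + (q*\<gamma>-\<beta>)*u + q)/u\<^sup>2 * (G (-u) - G u) = nu \<beta> \<gamma> k * G u"
    using onevar[OF g u0 q1 q2, of k \<beta>] unfolding G_def by blast
  have dt: "((\<lambda>t. t/y) has_real_derivative 1/y) (at (-x))"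
    using y0 by (auto intro!: derivative_eq_intros)
  have mx: "(-x)/y = -u" unfolding u_def by simp
  have dG': "(G has_real_derivative G1) (at ((-x)/y))" using dG mx by simp
  have dc: "((\<lambda>t. A * G (t/y)) has_real_derivative A * (G1 * (1/y))) (at (-x))"
    by (rule DERIV_cmult[OF DERIV_chain2[OF dG' dt]])
  have der: "deriv (\<lambda>t. calJ \<alpha> \<beta> \<gamma> \<delta> n k t y) (-x) = A * (G1 * (1/y))"
    unfolding cj by (rule DERIV_imp_deriv[OF dc])
  have cx: "calJ \<alpha> \<beta> \<gamma> \<delta> n k t y = A * G (t/y)" for t
    using fun_cong[OF cj, of t] by simp
  have f1: "2 * (y - x) * (x + \<delta>) / x * (1/y) = 2*(1-u)*(u+q)/u"
    unfolding xu dq using y0 u0 by (simp add: field_simps)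
  have f2: "((\<gamma> + \<beta> + 1) * x^2 + (\<delta> * \<gamma> - \<beta> * y) * x + \<delta> * y) / x^2
      = ((\<gamma>+\<beta>+1)*u\<^sup>2 + (q*\<gamma>-\<beta>)*u + q)/u\<^sup>2"
    unfolding xu dq using y0 u0 by (simp add: field_simps power2_eq_square)
  have "L2 \<beta> \<gamma> \<delta> (calJ \<alpha> \<beta> \<gamma> \<delta> n k) x y
      = 2 * (y - x) * (x + \<delta>) / x * (A * (G1 * (1/y)))
        + ((\<gamma> + \<beta> + 1) * x^2 + (\<delta> * \<gamma> - \<beta> * y) * x + \<delta> * y) / x^2 * (A * G (-u) - A * G u)"
    unfolding L2_def der unfolding cx u_def by simp
  also have "\<dots> = A * ((2 * (y - x) * (x + \<delta>) / x * (1/y)) * G1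
        + ((\<gamma> + \<beta> + 1) * x^2 + (\<delta> * \<gamma> - \<beta> * y) * x + \<delta> * y) / x^2 * (G (-u) - G u))"
    by (simp add: algebra_simps)
  also have "\<dots> = A * (nu \<beta> \<gamma> k * G u)" unfolding f1 f2 eq ..
  also have "\<dots> = nu \<beta> \<gamma> k * calJ \<alpha> \<beta> \<gamma> \<delta> n k x y" unfolding cx u_def by simp
  finally show ?thesis .
qed

end
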